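(* Let $G$ be an $n$-vertex connected graph with chromatic number $\chi \geq 2$, and suppose that $\chi$ divides $n$. Then \[ {\rm ABC}(G) \leq n \sqrt{\frac{\chi(n-1)-n}{2\chi}}, \] with equality if and only if $G \cong T_{n,\chi}$.
   Context: All graphs are simple and undirected. For a graph $G$ and a vertex $v$, $d(v)$ denotes the degree of $v$. The atom-bond connectivity (ABC) index is ${\rm ABC}(G)=\sum_{uv\in E(G)} \sqrt{\frac{d(u)+d(v)-2}{d(u)d(v)}}$. $T_{n,l}$ denotes the complete $l$-partite graph on $n$ vertices whose part sizes $t_1,\dots,t_l$ satisfy $|t_i - t_j| \leq 1$ for all $i,j$. *)

theory Defs
  imports Complex_Main
begin

definition simple_graph :: "'a set \<Rightarrow> 'a set set \<Rightarrow> bool" where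
  "simple_graph V E \<longleftrightarrow> finite V \<and> (\<forall>e\<in>E. e \<subseteq> V \<and> card e = 2)"

definition degree :: "'a set \<Rightarrow> 'a set set \<Rightarrow> 'a \<Rightarrow> nat" where
  "degree V E v = card {u \<in> V. {u, v} \<in> E}"

definition graph_connected :: "'a set \<Rightarrow> 'a set set \<Rightarrow> bool" where
  "graph_connected V E \<longleftrightarrow> V \<noteq> {} \<and>
     (\<forall>u\<in>V. \<forall>v\<in>V. (u, v) \<in> {(x, y). {x, y} \<in> E}\<^sup>*)"

definition proper_coloring :: "'a set \<Rightarrow> 'a set set \<Rightarrow> nat \<Rightarrow> ('a \<Rightarrow> nat) \<Rightarrow> bool" where
  "proper_coloring V E k c \<longleftrightarrow> (\<forall>v\<in>V. c v < k) \<and>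
     (\<forall>u\<in>V. \<forall>v\<in>V. {u, v} \<in> E \<longrightarrow> c u \<noteq> c v)"

definition chromatic_number :: "'a set \<Rightarrow> 'a set set \<Rightarrow> nat" where
  "chromatic_number V E = (LEAST k. \<exists>c. proper_coloring V E k c)"

definition ABC :: "'a set \<Rightarrow> 'a set set \<Rightarrow> real" where
  "ABC V E = (\<Sum>e\<in>E. sqrt (((\<Sum>v\<in>e. real (degree V E v)) - 2)
                            / (\<Prod>v\<in>e. real (degree V E v))))"

definition graph_iso :: "'a set \<Rightarrow> 'a set set \<Rightarrow> 'b set \<Rightarrow> 'b set set \<Rightarrow> bool" where
  "graph_iso V E W F \<longleftrightarrow> (\<exists>f. bij_betw f V W \<and>
     (\<forall>u\<in>V. \<forall>v\<in>V. {u, v} \<in> E \<longleftrightarrow> {f u, f v} \<in> F))"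

text \<open>Turan graph T_{n,l}: vertices 0..n-1, parts are the residue classes mod l
  (complete l-partite, part sizes differ by at most 1).\<close>
definition turan_vertices :: "nat \<Rightarrow> nat set" where
  "turan_vertices n = {0..<n}"

definition turan_edges :: "nat \<Rightarrow> nat \<Rightarrow> nat set set" where
  "turan_edges n l = {{i, j} | i j. i < n \<and> j < n \<and> i mod l \<noteq> j mod l}"

end

theory Submission imports Defs "HOL-Analysis.Convex" begin


lemma sg_fin: "simple_graph V E \<Longrightarrow> finite V"
  by (simp add: simple_graph_def)

lemma sg_finE: "simple_graph V E \<Longrightarrow> finite E"
proof -
  assume a: "simple_graph V E"
  hence "E \<subseteq> Pow V" by (auto simp: simple_graph_def)
  moreover have "finite (Pow V)" using a by (simp add: simple_graph_def)
  ultimately show "finite E" by (rule finite_subset)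
qed

lemma sg_edge: "simple_graph V E \<Longrightarrow> e \<in> E \<Longrightarrow> \<exists>a b. a \<noteq> b \<and> a \<in> V \<and> b \<in> V \<and> e = {a,b}"
proof -
  assume a: "simple_graph V E" "e \<in> E"
  hence "card e = 2" "e \<subseteq> V" by (auto simp: simple_graph_def)
  then obtain x y where "e = {x,y}" "x \<noteq> y" by (auto simp: card_2_iff)
  thus ?thesis using \<open>e \<subseteq> V\<close> by blast
qed

lemma sg_edge_ne: "simple_graph V E \<Longrightarrow> {u,v} \<in> E \<Longrightarrow> u \<noteq> v \<and> u \<in> V \<and> v \<in> V"
proof -
  assume a: "simple_graph V E" "{u,v} \<in> E"
  hence c: "card {u,v} = 2" "{u,v} \<subseteq> V" by (auto simp: simple_graph_def)
  have "u \<noteq> v" proof assume "u = v" thus False using c by simp qed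
  thus ?thesis using c by blast
qed



lemma deg_card: assumes "simple_graph V E" "v \<in> V"
  shows "card {e\<in>E. v \<in> e} = degree V E v"
proof -
  have "bij_betw (\<lambda>u. {u,v}) {u\<in>V. {u,v}\<in>E} {e\<in>E. v \<in> e}"
  proof (rule bij_betwI')
    fix x y assume "x \<in> {u\<in>V. {u,v}\<in>E}" "y \<in> {u\<in>V. {u,v}\<in>E}"
    show "({x, v} = {y, v}) = (x = y)" by (auto simp: doubleton_eq_iff)
  next
    fix x assume "x \<in> {u\<in>V. {u,v}\<in>E}" thus "{x,v} \<in> {e\<in>E. v \<in> e}" by auto
  next
    fix e assume e: "e \<in> {e\<in>E. v \<in> e}"
    then obtain a b where ab: "a \<noteq> b" "a \<in> V" "b \<in> V" "e = {a,b}" using sg_edge[OF assms(1)] by blast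
    show "\<exists>x\<in>{u\<in>V. {u,v}\<in>E}. e = {x, v}"
    proof (cases "v = a")
      case True
      have "{b,a} = {a,b}" by blast
      thus ?thesis using ab e True by (intro bexI[of _ b]) auto
    next
      case False hence "v = b" using ab e by auto
      thus ?thesis using ab e by (intro bexI[of _ a]) auto
    qed
  qed
  thus ?thesis unfolding degree_def by (simp add: bij_betw_same_card)
qed



lemma handshake: assumes "simple_graph V E"
  shows "(\<Sum>e\<in>E. \<Sum>v\<in>e. (\<phi> v::real)) = (\<Sum>v\<in>V. real (degree V E v) * \<phi> v)"
proof -
  have fV: "finite V" and fE: "finite E" using assms sg_fin sg_finE by auto
  have sub: "\<And>e. e \<in> E \<Longrightarrow> e \<subseteq> V" using assms by (auto simp: simple_graph_def)
  have "(\<Sum>e\<in>E. \<Sum>v\<in>e. \<phi> v) = (\<Sum>e\<in>E. \<Sum>v\<in>V. if v \<in> e then \<phi> v else 0)"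
  proof (rule sum.cong)
    fix e assume "e \<in> E"
    hence s: "{v\<in>V. v \<in> e} = e" using sub by auto
    have "(\<Sum>v\<in>{v\<in>V. v \<in> e}. \<phi> v) = (\<Sum>v\<in>V. if v \<in> e then \<phi> v else 0)"
      by (rule sum.inter_filter[OF fV])
    thus "(\<Sum>v\<in>e. \<phi> v) = (\<Sum>v\<in>V. if v \<in> e then \<phi> v else 0)" unfolding s .
  qed simp
  also have "\<dots> = (\<Sum>v\<in>V. \<Sum>e\<in>E. if v \<in> e then \<phi> v else 0)" by (rule sum.swap)
  also have "\<dots> = (\<Sum>v\<in>V. real (degree V E v) * \<phi> v)"
  proof (rule sum.cong)
    fix v assume v: "v \<in> V"
    have "(\<Sum>e\<in>E. if v \<in> e then \<phi> v else 0) = (\<Sum>e\<in>{e\<in>E. v\<in>e}. \<phi> v)"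
      using sum.inter_filter[OF fE, of "\<lambda>_. \<phi> v" "\<lambda>e. v \<in> e"] by simp
    also have "\<dots> = real (card {e\<in>E. v\<in>e}) * \<phi> v" by simp
    finally show "(\<Sum>e\<in>E. if v \<in> e then \<phi> v else 0) = real (degree V E v) * \<phi> v"
      using deg_card[OF assms v] by simp
  qed simp
  finally show ?thesis .
qed



lemma deg_pos: assumes "simple_graph V E" "graph_connected V E" "card V \<ge> 2" "v \<in> V"
  shows "degree V E v \<ge> 1"
proof -
  have fV: "finite V" using assms(1) by (rule sg_fin)
  have "\<not> V \<subseteq> {v}"
  proof
    assume "V \<subseteq> {v}" hence "card V \<le> card {v}" using card_mono[of "{v}" V] by simp
    thus False using assms(3) by simp
  qed
  then obtain u where u: "u \<in> V" "u \<noteq> v" by blast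
  have conn: "\<forall>u\<in>V. \<forall>v\<in>V. (u, v) \<in> {(x, y). {x, y} \<in> E}\<^sup>*" using assms(2) unfolding graph_connected_def by simp
  have "(v,u) \<in> {(x, y). {x, y} \<in> E}\<^sup>*" using conn u(1) assms(4) by simp
  then obtain w where "(v,w) \<in> {(x, y). {x, y} \<in> E}" using u(2)
    by (cases rule: converse_rtranclE) auto
  hence "{v,w} \<in> E" by simp
  moreover have "{w,v} = {v,w}" by (rule insert_commute)
  ultimately have wv: "{w,v} \<in> E" by (simp only:)
  hence "w \<in> V" using sg_edge_ne[OF assms(1) wv] by simp
  hence "w \<in> {u\<in>V. {u,v}\<in>E}" using wv by simp
  hence "{u\<in>V. {u,v}\<in>E} \<noteq> {}" by blast
  hence "card {u\<in>V. {u,v}\<in>E} > 0" using fV by (simp add: card_gt_0_iff)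
  thus ?thesis unfolding degree_def by simp
qed


definition qf :: "real \<Rightarrow> real \<Rightarrow> real" where "qf D d = d * (D*(D-2) + d) / (2*D^2)"
definition Lf :: "real \<Rightarrow> real \<Rightarrow> real" where
  "Lf D M = (3*M^2 - 2*(2*(D+M) + (D^2-2*D))*M + (D+M)*((D+M) + (D^2-2*D))) / (2*D^2)"

lemma q_ident: assumes "D > 0"
  shows "M * qf D D + Lf D M * (t - M) - t * qf D (D+M-t) = (t-M)^2*(D^2-t)/(2*D^2)"
proof -
  have "2*D^2 * (M * qf D D + Lf D M * (t - M) - t * qf D (D+M-t)) = (t-M)^2*(D^2-t)"
  proof -
    have e1: "\<And>d. 2*D^2*qf D d = d*(D*(D-2)+d)" using assms unfolding qf_def by simp
    have e2: "2*D^2*Lf D M = 3*M^2 - 2*(2*(D+M) + (D^2-2*D))*M + (D+M)*((D+M) + (D^2-2*D))"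
      using assms unfolding Lf_def by simp
    have "2*D^2 * (M * qf D D + Lf D M * (t - M) - t * qf D (D+M-t))
       = M*(2*D^2*qf D D) + (2*D^2*Lf D M)*(t-M) - t*(2*D^2*qf D (D+M-t))" by (simp add: algebra_simps)
    also have "\<dots> = (t-M)^2*(D^2-t)" unfolding e1 e2 by (simp add: power2_eq_square algebra_simps)
    finally show ?thesis .
  qed
  thus ?thesis using assms by (simp add: field_simps)
qed

lemma q_tangent: assumes "D \<ge> M" "D \<ge> 1" "t \<le> D + M - 1"
  shows "t * qf D (D+M-t) \<le> M * qf D D + Lf D M * (t - M)"
    "t * qf D (D+M-t) = M * qf D D + Lf D M * (t - M) \<Longrightarrow> t = M"
proof -
  have D0: "D > 0" using assms by simp
  have "D^2 - t = (D-1)^2 + (D - M) + (D + M - 1 - t)" by (simp add: power2_eq_square algebra_simps)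
  hence h: "D^2 - t \<ge> 0" using assms by (smt (verit) zero_le_power2)
  have "(t-M)^2*(D^2-t)/(2*D^2) \<ge> 0" using h by simp
  thus "t * qf D (D+M-t) \<le> M * qf D D + Lf D M * (t - M)" using q_ident[OF D0, of M t] by linarith
  assume eq: "t * qf D (D+M-t) = M * qf D D + Lf D M * (t - M)"
  hence "(t-M)^2*(D^2-t)/(2*D^2) = 0" using q_ident[OF D0, of M t] by linarith
  hence "(t-M)^2 = 0 \<or> D^2 - t = 0" using D0 by simp
  thus "t = M"
  proof
    assume "(t-M)^2 = 0" thus ?thesis by simp
  next
    assume a: "D^2 - t = 0"
    have "D^2 - t = (D-1)^2 + (D - M) + (D + M - 1 - t)" by (simp add: power2_eq_square algebra_simps)
    hence "(D-1)^2 \<le> 0" using a assms by linarith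
    hence "D = 1" by simp
    thus ?thesis using a assms by simp
  qed
qed

lemma tangent1: fixes s D :: real assumes "s > 0" "D > 0"
  shows "1 - 2/s \<le> 1 - 2/D + s/(2*D^2)" "1 - 2/s = 1 - 2/D + s/(2*D^2) \<Longrightarrow> s = 2*D"
proof -
  have id: "(1 - 2/D + s/(2*D^2)) - (1 - 2/s) = (s - 2*D)^2/(2*D^2*s)"
    using assms by (simp add: field_simps power2_eq_square)
  have "(s - 2*D)^2/(2*D^2*s) \<ge> 0" using assms by simp
  thus "1 - 2/s \<le> 1 - 2/D + s/(2*D^2)" using id by linarith
  assume "1 - 2/s = 1 - 2/D + s/(2*D^2)"
  hence "(s - 2*D)^2/(2*D^2*s) = 0" using id by linarith
  thus "s = 2*D" using assms by simp
qed

lemma q_mono: assumes "D \<ge> 1" "1 \<le> a" "a \<le> b" shows "qf D a \<le> qf D b" "qf D a = qf D b \<Longrightarrow> a = b"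
proof -
  have id: "qf D b - qf D a = (b-a)*(D*(D-2)+a+b)/(2*D^2)" unfolding qf_def using assms
    by (simp add: field_simps power2_eq_square)
  have "D*(D-2) = (D-1)^2 - 1" by (simp add: power2_eq_square algebra_simps)
  hence p: "D*(D-2)+a+b > 0" using assms by (smt (verit) zero_le_power2)
  have "(b-a)*(D*(D-2)+a+b)/(2*D^2) \<ge> 0" using p assms by simp
  thus "qf D a \<le> qf D b" using id by linarith
  assume "qf D a = qf D b"
  hence "(b-a)*(D*(D-2)+a+b)/(2*D^2) = 0" using id by linarith
  thus "a = b" using p assms by simp
qed



lemma turan_mem: "{a,b} \<in> turan_edges n k \<longleftrightarrow> a < n \<and> b < n \<and> a mod k \<noteq> b mod k"
  unfolding turan_edges_def by (auto simp: doubleton_eq_iff)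

lemma res_card: assumes "k > 0" "r < k"
  shows "card {j\<in>{0..<k*m}. j mod k = (r::nat)} = m"
proof -
  have "bij_betw (\<lambda>i. r + k*i) {0..<m} {j\<in>{0..<k*m}. j mod k = r}"
  proof (rule bij_betwI')
    fix x y assume "x \<in> {0..<m}" "y \<in> {0..<m}" show "(r + k * x = r + k * y) = (x = y)" using assms by simp
  next
    fix x assume "x \<in> {0..<m}"
    hence x1: "x + 1 \<le> m" by simp
    have "r + k*x < k*(x+1)" using assms by auto
    moreover have "k*(x+1) \<le> k*m" using x1 by (rule mult_le_mono2)
    ultimately have "r + k*x < k*m" by linarith
    thus "r + k * x \<in> {j \<in> {0..<k * m}. j mod k = r}" using assms by auto
  next
    fix j assume j: "j \<in> {j \<in> {0..<k * m}. j mod k = r}"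
    have "j = j mod k + k * (j div k)" by simp
    hence "j = r + k * (j div k)" using j by (metis (mono_tags, lifting) mem_Collect_eq)
    moreover have "j div k < m" using j assms by (simp add: less_mult_imp_div_less mult.commute)
    ultimately show "\<exists>x\<in>{0..<m}. j = r + k * x" by auto
  qed
  thus ?thesis by (simp add: bij_betw_same_card[symmetric])
qed

lemma nres_card: assumes "k > 0" "r < k"
  shows "card {j\<in>{0..<k*m}. j mod k \<noteq> (r::nat)} = k*m - m"
proof -
  have e: "{j\<in>{0..<k*m}. j mod k \<noteq> r} = {0..<k*m} - {j\<in>{0..<k*m}. j mod k = r}" by auto
  have "card ({0..<k*m} - {j\<in>{0..<k*m}. j mod k = r}) = card {0..<k*m} - card {j\<in>{0..<k*m}. j mod k = r}"
    by (rule card_Diff_subset) auto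
  thus ?thesis unfolding e res_card[OF assms, of m] by simp
qed



theorem corollary3:
  fixes V :: "'a set" and E :: "'a set set" and n :: nat
  assumes "simple_graph V E"
    and "card V = n"
    and "graph_connected V E"
    and "chromatic_number V E \<ge> 2"
    and "chromatic_number V E dvd n"
  shows "ABC V E \<le> real n * sqrt ((real (chromatic_number V E) * (real n - 1) - real n)
                                     / (2 * real (chromatic_number V E)))
         \<and> (ABC V E = real n * sqrt ((real (chromatic_number V E) * (real n - 1) - real n)
                                     / (2 * real (chromatic_number V E)))
         \<longleftrightarrow> graph_iso V E (turan_vertices n) (turan_edges n (chromatic_number V E)))"
proof -
  define k where "k = chromatic_number V E"
  have sg: "simple_graph V E" by fact
  have fV: "finite V" using sg by (rule sg_fin)
  have fE: "finite E" using sg by (rule sg_finE)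
  have k2: "k \<ge> 2" using assms(4) k_def by simp
  have n2: "n \<ge> 2"
  proof (rule ccontr)
    assume "\<not> n \<ge> 2"
    hence le1: "card V \<le> 1" using assms(2) by simp
    have "proper_coloring V E 1 (\<lambda>_. 0)"
      unfolding proper_coloring_def
    proof (intro conjI ballI impI)
      fix u v assume uv: "u \<in> V" "v \<in> V" "{u,v} \<in> E"
      have "u = v" using card_le_Suc0_iff_eq[OF fV] le1 uv by auto
      thus "(0::nat) \<noteq> 0" using sg_edge_ne[OF sg uv(3)] by simp
    qed simp
    hence "\<exists>c. proper_coloring V E 1 c" by blast
    hence "k \<le> 1" unfolding k_def chromatic_number_def by (rule Least_le)
    thus False using k2 by simp
  qed
  obtain c where col: "proper_coloring V E k c"
  proof -
    obtain h where h: "bij_betw h V {0..<card V}" using ex_bij_betw_finite_nat[OF fV] by blast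
    have "proper_coloring V E n h"
      unfolding proper_coloring_def
    proof (intro conjI ballI impI)
      fix v assume "v \<in> V" thus "h v < n" using h assms(2) by (auto simp: bij_betw_def)
    next
      fix u v assume uv: "u \<in> V" "v \<in> V" "{u,v} \<in> E"
      have "u \<noteq> v" using sg_edge_ne[OF sg uv(3)] by simp
      thus "h u \<noteq> h v" using h uv by (auto simp: bij_betw_def inj_on_def)
    qed
    hence "\<exists>c. proper_coloring V E n c" by blast
    hence "\<exists>c. proper_coloring V E k c" unfolding k_def chromatic_number_def by (rule LeastI)
    thus ?thesis using that by blast
  qed
  obtain m where nkm: "n = k * m" using assms(5) k_def by (auto elim: dvdE)
  have m1: "m \<ge> 1" using n2 nkm by (cases m) auto
  define N where "N = real n"
  define M where "M = real m"
  define D where "D = N - M"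
  have NKM: "N = real k * M" unfolding N_def M_def nkm by simp
  have DM: "D \<ge> M" unfolding D_def NKM using k2 M_def m1 by (simp add: algebra_simps)
  have M1: "M \<ge> 1" using m1 M_def by simp
  have D1: "D \<ge> 1" using DM M1 by simp
  have rhs: "(real k * (real n - 1) - real n) / (2 * real k) = (D - 1)/2"
    using k2 unfolding D_def NKM N_def[symmetric] by (simp add: field_simps)
  define x where "x v = real (degree V E v)" for v
  have x1: "\<And>v. v \<in> V \<Longrightarrow> x v \<ge> 1" unfolding x_def using deg_pos[OF sg assms(3)] n2 assms(2) by simp
  define t where "t i = card {v\<in>V. c v = i}" for i
  define Dv where "Dv v = real (card {u\<in>V. c u \<noteq> c v})" for v
  have cv: "\<And>v. v \<in> V \<Longrightarrow> c v < k" using col unfolding proper_coloring_def by blast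
  have cadj: "\<And>u v. u \<in> V \<Longrightarrow> v \<in> V \<Longrightarrow> {u,v} \<in> E \<Longrightarrow> c u \<noteq> c v"
    using col unfolding proper_coloring_def by blast
  have Dv_eq: "\<And>v. v \<in> V \<Longrightarrow> Dv v = N - real (t (c v))"
  proof -
    fix v assume v: "v \<in> V"
    have e: "{u\<in>V. c u \<noteq> c v} = V - {u\<in>V. c u = c v}" by auto
    have "card (V - {u\<in>V. c u = c v}) = card V - card {u\<in>V. c u = c v}"
      by (rule card_Diff_subset) (use fV in auto)
    moreover have "card {u\<in>V. c u = c v} \<le> card V" by (rule card_mono[OF fV]) auto
    ultimately show "Dv v = N - real (t (c v))" unfolding Dv_def t_def N_def e assms(2)[symmetric]
      by (simp add: of_nat_diff)
  qed
  have nbr_sub: "\<And>v. v \<in> V \<Longrightarrow> {u\<in>V. {u,v}\<in>E} \<subseteq> {u\<in>V. c u \<noteq> c v}"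
    using cadj by blast
  have xDv: "\<And>v. v \<in> V \<Longrightarrow> x v \<le> Dv v"
  proof -
    fix v assume v: "v \<in> V"
    have "card {u\<in>V. {u,v}\<in>E} \<le> card {u\<in>V. c u \<noteq> c v}" by (rule card_mono) (use fV nbr_sub v in auto)
    thus "x v \<le> Dv v" unfolding x_def Dv_def degree_def by simp
  qed
  have cimg: "c ` V \<subseteq> {..<k}" using cv by auto
  have sum_t: "(\<Sum>i<k. real (t i)) = N"
  proof -
    have "(\<Sum>i\<in>{..<k}. \<Sum>v\<in>{x. x \<in> V \<and> c x = i}. (1::real)) = (\<Sum>v\<in>V. 1)"
      by (rule sum.group[OF fV finite_lessThan cimg])
    thus ?thesis unfolding t_def N_def assms(2)[symmetric] by simp
  qed
  have tle: "\<And>i. i < k \<Longrightarrow> real (t i) \<le> N - 1"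
  proof -
    fix i assume "i < k"
    show "real (t i) \<le> N - 1"
    proof (cases "\<exists>v\<in>V. c v = i")
      case True
      then obtain v where v: "v \<in> V" "c v = i" by blast
      show ?thesis using x1[OF v(1)] xDv[OF v(1)] Dv_eq[OF v(1)] v(2) by simp
    next
      case False
      hence "{v\<in>V. c v = i} = {}" by auto
      hence "t i = 0" unfolding t_def by (metis card.empty)
      thus ?thesis using n2 N_def by simp
    qed
  qed
  have D0: "D > 0" using D1 by simp
  have xdeg: "\<And>v. real (degree V E v) = x v" unfolding x_def by simp
  define w where "w e = (\<Sum>v\<in>e. 1 / x v)" for e
  define z where "z e = 1 - 2 / (\<Sum>v\<in>e. x v)" for e
  define p where "p d = (1 - 2/D)/2 + d/(2*D^2)" for d
  have edge_facts: "\<And>e. e \<in> E \<Longrightarrow> w e \<ge> 0 \<and> z e \<ge> 0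
      \<and> sqrt (((\<Sum>v\<in>e. real (degree V E v)) - 2) / (\<Prod>v\<in>e. real (degree V E v))) = sqrt (w e) * sqrt (z e)
      \<and> z e \<le> (\<Sum>v\<in>e. p (x v))
      \<and> (z e = (\<Sum>v\<in>e. p (x v)) \<longrightarrow> (\<Sum>v\<in>e. x v) = 2 * D)"
  proof -
    fix e assume e: "e \<in> E"
    obtain a b where ab: "a \<noteq> b" "a \<in> V" "b \<in> V" "e = {a,b}" using sg_edge[OF sg e] by blast
    have xa: "x a \<ge> 1" and xb: "x b \<ge> 1" using x1 ab by auto
    have we: "w e = 1/x a + 1/x b" unfolding w_def using ab by simp
    have ze: "z e = 1 - 2/(x a + x b)" unfolding z_def using ab by simp
    have pe: "(\<Sum>v\<in>e. p (x v)) = 1 - 2/D + (x a + x b)/(2*D^2)" unfolding p_def using ab D0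
      by (simp add: field_simps)
    have t1: "1 - 2/(x a + x b) \<le> 1 - 2/D + (x a + x b)/(2*D^2)"
      "1 - 2/(x a + x b) = 1 - 2/D + (x a + x b)/(2*D^2) \<Longrightarrow> x a + x b = 2*D"
      using tangent1[of "x a + x b" D] xa xb D0 by auto
    have "2/(x a + x b) \<le> 1" using xa xb by simp
    hence z0: "z e \<ge> 0" using ze by simp
    have w0: "w e \<ge> 0" using we xa xb by simp
    have "((\<Sum>v\<in>e. real (degree V E v)) - 2) / (\<Prod>v\<in>e. real (degree V E v)) = (x a + x b - 2)/(x a * x b)"
      using ab by (simp add: xdeg)
    also have "\<dots> = w e * z e" proof -
      have h1: "1/x a + 1/x b = (x a + x b)/(x a * x b)" using xa xb by (simp add: field_simps)
      have h2: "1 - 2/(x a + x b) = (x a + x b - 2)/(x a + x b)" using xa xb by (simp add: field_simps)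
      have "(x a + x b)/(x a * x b) * ((x a + x b - 2)/(x a + x b)) = (x a + x b - 2)/(x a * x b)"
        using xa xb by simp
      thus ?thesis unfolding we ze h1 h2 by simp
    qed
    finally have "sqrt (((\<Sum>v\<in>e. real (degree V E v)) - 2) / (\<Prod>v\<in>e. real (degree V E v))) = sqrt (w e) * sqrt (z e)"
      by (simp add: real_sqrt_mult)
    moreover have "(\<Sum>v\<in>e. x v) = x a + x b" using ab by simp
    ultimately show "?thesis e" using z0 w0 t1 ze pe by auto
  qed
  have ABC_eq: "ABC V E = (\<Sum>e\<in>E. sqrt (w e) * sqrt (z e))"
    unfolding ABC_def by (rule sum.cong) (use edge_facts in auto)
  have ABC0: "ABC V E \<ge> 0" unfolding ABC_eq by (rule sum_nonneg) (use edge_facts in auto)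
  have CS: "(ABC V E)^2 \<le> (\<Sum>e\<in>E. w e) * (\<Sum>e\<in>E. z e)"
  proof -
    have "(ABC V E)^2 \<le> (\<Sum>e\<in>E. (sqrt (w e))^2) * (\<Sum>e\<in>E. (sqrt (z e))^2)"
      unfolding ABC_eq by (rule Cauchy_Schwarz_ineq_sum)
    also have "\<dots> = (\<Sum>e\<in>E. w e) * (\<Sum>e\<in>E. z e)" using edge_facts by simp
    finally show ?thesis .
  qed
  have sumw: "(\<Sum>e\<in>E. w e) = N"
  proof -
    have "(\<Sum>e\<in>E. w e) = (\<Sum>v\<in>V. real (degree V E v) * (1 / x v))" unfolding w_def by (rule handshake[OF sg])
    also have "\<dots> = (\<Sum>v\<in>V. 1)" using x1 by (intro sum.cong) (auto simp: xdeg, fastforce)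
    finally show ?thesis unfolding N_def assms(2)[symmetric] by simp
  qed
  define S2 where "S2 = (\<Sum>v\<in>V. qf D (x v))"
  define S3 where "S3 = (\<Sum>v\<in>V. qf D (Dv v))"
  define S4 where "S4 = (\<Sum>i<k. real (t i) * qf D (D + M - real (t i)))"
  define B where "B = N * (D - 1) / 2"
  have S1S2: "(\<Sum>e\<in>E. z e) \<le> S2"
  proof -
    have "(\<Sum>e\<in>E. z e) \<le> (\<Sum>e\<in>E. \<Sum>v\<in>e. p (x v))" by (rule sum_mono) (use edge_facts in auto)
    also have "\<dots> = (\<Sum>v\<in>V. real (degree V E v) * p (x v))" by (rule handshake[OF sg])
    also have "\<dots> = S2" unfolding S2_def using D0 by (intro sum.cong) (auto simp: xdeg p_def qf_def field_simps power2_eq_square)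
    finally show ?thesis .
  qed
  have S2S3: "S2 \<le> S3" unfolding S2_def S3_def by (rule sum_mono) (use q_mono(1) D1 x1 xDv in auto)
  have S3S4: "S3 = S4"
  proof -
    have "S3 = (\<Sum>v\<in>V. qf D (N - real (t (c v))))" unfolding S3_def using Dv_eq by simp
    also have "\<dots> = (\<Sum>i\<in>{..<k}. \<Sum>v\<in>{x. x \<in> V \<and> c x = i}. qf D (N - real (t (c v))))"
      by (rule sum.group[OF fV finite_lessThan cimg, symmetric])
    also have "\<dots> = S4" unfolding S4_def
    proof (rule sum.cong)
      fix i assume "i \<in> {..<k}"
      have "(\<Sum>v\<in>{x. x \<in> V \<and> c x = i}. qf D (N - real (t (c v)))) = (\<Sum>v\<in>{x. x \<in> V \<and> c x = i}. qf D (N - real (t i)))"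
        by (rule sum.cong) auto
      also have "\<dots> = real (t i) * qf D (D + M - real (t i))" unfolding t_def D_def by simp
      finally show "(\<Sum>v\<in>{x. x \<in> V \<and> c x = i}. qf D (N - real (t (c v)))) = real (t i) * qf D (D + M - real (t i))" .
    qed simp
    finally show ?thesis .
  qed
  have qDD: "qf D D = (D - 1)/2" unfolding qf_def using D0 by (simp add: field_simps power2_eq_square)
  have tang: "\<And>i. i < k \<Longrightarrow> real (t i) * qf D (D + M - real (t i)) \<le> M * qf D D + Lf D M * (real (t i) - M)"
    "\<And>i. i < k \<Longrightarrow> real (t i) * qf D (D + M - real (t i)) = M * qf D D + Lf D M * (real (t i) - M) \<Longrightarrow> real (t i) = M"
  proof -
    fix i assume i: "i < k"
    have ti: "real (t i) \<le> D + M - 1" using tle[OF i] D_def by simp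
    show "real (t i) * qf D (D + M - real (t i)) \<le> M * qf D D + Lf D M * (real (t i) - M)"
      by (rule q_tangent(1)[OF DM D1 ti])
  next
    fix i assume i: "i < k"
    have ti: "real (t i) \<le> D + M - 1" using tle[OF i] D_def by simp
    assume "real (t i) * qf D (D + M - real (t i)) = M * qf D D + Lf D M * (real (t i) - M)"
    thus "real (t i) = M" by (rule q_tangent(2)[OF DM D1 ti])
  qed
  have sumL: "(\<Sum>i<k. M * qf D D + Lf D M * (real (t i) - M)) = B"
  proof -
    have "(\<Sum>i<k. M * qf D D + Lf D M * (real (t i) - M)) = real k * M * qf D D + Lf D M * ((\<Sum>i<k. real (t i)) - real k * M)"
      by (simp add: sum.distrib sum_distrib_left sum_subtractf algebra_simps)
    also have "\<dots> = B" unfolding sum_t B_def qDD NKM[symmetric] by simp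
    finally show ?thesis .
  qed
  have S4B: "S4 \<le> B" unfolding S4_def sumL[symmetric] by (rule sum_mono) (use tang in auto)
  have main: "(ABC V E)^2 \<le> N * B"
  proof -
    have "(ABC V E)^2 \<le> N * (\<Sum>e\<in>E. z e)" using CS sumw by simp
    also have "\<dots> \<le> N * B" using S1S2 S2S3 S3S4 S4B N_def by (intro mult_left_mono) auto
    finally show ?thesis .
  qed
  have RHS: "real n * sqrt ((real k * (real n - 1) - real n) / (2 * real k)) = N * sqrt ((D-1)/2)"
    unfolding rhs N_def ..
  have NB: "N * B = (N * sqrt ((D-1)/2))^2"
  proof -
    have sq: "(sqrt ((D-1)/2))^2 = (D-1)/2" using D1 by simp
    show ?thesis unfolding power_mult_distrib sq B_def by (simp add: power2_eq_square)
  qed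
  have RHS0: "N * sqrt ((D-1)/2) \<ge> 0" using N_def D1 by simp
  have Npos: "N > 0" using n2 N_def by simp
  have "(ABC V E)^2 \<le> (N * sqrt ((D-1)/2))^2" using main unfolding NB .
  hence "ABC V E \<le> N * sqrt ((D-1)/2)" using RHS0 by (rule power2_le_imp_le)
  moreover have fwd: "ABC V E = N * sqrt ((D-1)/2) \<Longrightarrow> graph_iso V E (turan_vertices n) (turan_edges n k)"
  proof -
    assume eq: "ABC V E = N * sqrt ((D-1)/2)"
    have "N * B \<le> N * S2"
    proof -
      have "N * B = (ABC V E)^2" using eq NB by simp
      also have "\<dots> \<le> N * (\<Sum>e\<in>E. z e)" using CS sumw by simp
      also have "\<dots> \<le> N * S2" using S1S2 Npos by simp
      finally show ?thesis .
    qed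
    hence BS2: "B \<le> S2" using Npos by simp
    hence S23: "S2 = S3" and S4eq: "S4 = B" using S2S3 S3S4 S4B by auto
    have xeq: "\<And>v. v \<in> V \<Longrightarrow> x v = Dv v"
    proof -
      fix v assume v: "v \<in> V"
      have "qf D (x v) = qf D (Dv v)"
      proof (rule ccontr)
        assume ne: "qf D (x v) \<noteq> qf D (Dv v)"
        have le: "\<forall>u\<in>V. qf D (x u) \<le> qf D (Dv u)" using q_mono(1) D1 x1 xDv by auto
        hence "qf D (x v) < qf D (Dv v)" using ne v by (simp add: order_less_le)
        hence "S2 < S3" unfolding S2_def S3_def using le v fV by (intro sum_strict_mono_ex1) auto
        thus False using S23 by simp
      qed
      thus "x v = Dv v" using q_mono(2)[OF D1 x1[OF v] xDv[OF v]] by simp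
    qed
    have nbr_eq: "\<And>v. v \<in> V \<Longrightarrow> {u\<in>V. {u,v}\<in>E} = {u\<in>V. c u \<noteq> c v}"
    proof -
      fix v assume v: "v \<in> V"
      have "card {u\<in>V. {u,v}\<in>E} = card {u\<in>V. c u \<noteq> c v}"
        using xeq[OF v] unfolding x_def Dv_def degree_def by simp
      thus "{u\<in>V. {u,v}\<in>E} = {u\<in>V. c u \<noteq> c v}"
        using nbr_sub[OF v] fV by (intro card_subset_eq) auto
    qed
    have adj: "\<And>u v. u \<in> V \<Longrightarrow> v \<in> V \<Longrightarrow> {u,v}\<in>E \<longleftrightarrow> c u \<noteq> c v"
    proof -
      fix u v assume uv: "u \<in> V" "v \<in> V"
      have "u \<in> {u\<in>V. {u,v}\<in>E} \<longleftrightarrow> u \<in> {u\<in>V. c u \<noteq> c v}" using nbr_eq[OF uv(2)] by simp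
      thus "{u,v}\<in>E \<longleftrightarrow> c u \<noteq> c v" using uv by simp
    qed
    have teq: "\<And>i. i < k \<Longrightarrow> t i = m"
    proof -
      fix i assume i: "i < k"
      have "real (t i) * qf D (D + M - real (t i)) = M * qf D D + Lf D M * (real (t i) - M)"
      proof (rule ccontr)
        assume ne: "real (t i) * qf D (D + M - real (t i)) \<noteq> M * qf D D + Lf D M * (real (t i) - M)"
        hence "real (t i) * qf D (D + M - real (t i)) < M * qf D D + Lf D M * (real (t i) - M)"
          using tang(1)[OF i] by simp
        hence "S4 < B" unfolding S4_def sumL[symmetric] using i tang(1)
          by (intro sum_strict_mono_ex1) auto
        thus False using S4eq by simp
      qed
      hence "real (t i) = M" by (rule tang(2)[OF i])
      thus "t i = m" unfolding M_def by simp
    qed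
    have "\<forall>i. \<exists>h. i < k \<longrightarrow> bij_betw h {v\<in>V. c v = i} {0..<m}"
    proof
      fix i
      show "\<exists>h. i < k \<longrightarrow> bij_betw h {v\<in>V. c v = i} {0..<m}"
      proof (cases "i < k")
        case True
        obtain h where "bij_betw h {v\<in>V. c v = i} {0..<card {v\<in>V. c v = i}}"
          using ex_bij_betw_finite_nat[of "{v\<in>V. c v = i}"] fV by auto
        thus ?thesis using teq[OF True] unfolding t_def by auto
      qed simp
    qed
    then obtain H where H0: "\<forall>i. i < k \<longrightarrow> bij_betw (H i) {v\<in>V. c v = i} {0..<m}"
      by (rule choice[THEN exE]) blast
    hence H: "\<And>i. i < k \<Longrightarrow> bij_betw (H i) {v\<in>V. c v = i} {0..<m}" by blast
    define f where "f v = c v + k * H (c v) v" for v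
    have fmod: "\<And>v. v \<in> V \<Longrightarrow> f v mod k = c v" unfolding f_def using cv by simp
    have Hlt: "\<And>v. v \<in> V \<Longrightarrow> H (c v) v < m"
    proof -
      fix v assume v: "v \<in> V"
      have "v \<in> {u\<in>V. c u = c v}" using v by simp
      thus "H (c v) v < m" using H[OF cv[OF v]] by (auto simp: bij_betw_def)
    qed
    have flt: "\<And>v. v \<in> V \<Longrightarrow> f v < n"
    proof -
      fix v assume v: "v \<in> V"
      have "c v + k * H (c v) v < k * (H (c v) v + 1)" using cv[OF v] by simp
      also have "\<dots> \<le> k * m" using Hlt[OF v] by (intro mult_le_mono2) simp
      finally show "f v < n" unfolding f_def nkm .
    qed
    have finj: "inj_on f V"
    proof (rule inj_onI)
      fix u v assume uv: "u \<in> V" "v \<in> V" "f u = f v"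
      have cuv: "c u = c v" using fmod uv by metis
      hence "H (c u) u = H (c u) v" using uv(3) k2 unfolding f_def by simp
      moreover have "inj_on (H (c u)) {w\<in>V. c w = c u}" using H[OF cv[OF uv(1)]] by (simp add: bij_betw_def)
      ultimately show "u = v" using uv cuv by (auto dest: inj_onD)
    qed
    have "f ` V = {0..<n}"
    proof (rule card_subset_eq)
      show "f ` V \<subseteq> {0..<n}" using flt by auto
      show "card (f ` V) = card {0..<n}" using card_image[OF finj] assms(2) by simp
    qed simp
    hence fbij: "bij_betw f V {0..<n}" using finj by (simp add: bij_betw_def)
    show "graph_iso V E (turan_vertices n) (turan_edges n k)"
      unfolding graph_iso_def turan_vertices_def
    proof (intro exI conjI ballI)
      show "bij_betw f V {0..<n}" by (rule fbij)
    next
      fix u v assume uv: "u \<in> V" "v \<in> V"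
      show "({u, v} \<in> E) = ({f u, f v} \<in> turan_edges n k)"
        unfolding adj[OF uv] turan_mem using flt uv fmod by simp
    qed
  qed
  moreover have bwd: "graph_iso V E (turan_vertices n) (turan_edges n k) \<Longrightarrow> ABC V E = N * sqrt ((D-1)/2)"
  proof -
    assume "graph_iso V E (turan_vertices n) (turan_edges n k)"
    then obtain f where fb: "bij_betw f V {0..<n}"
      and fp: "\<And>u v. u \<in> V \<Longrightarrow> v \<in> V \<Longrightarrow> {u,v} \<in> E \<longleftrightarrow> {f u, f v} \<in> turan_edges n k"
      unfolding graph_iso_def turan_vertices_def by blast
    have k0: "k > 0" using k2 by simp
    have xD: "\<And>v. v \<in> V \<Longrightarrow> x v = D"
    proof -
      fix v assume v: "v \<in> V"
      have fvn: "f v < n" using fb v by (auto simp: bij_betw_def)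
      have img: "f ` {u\<in>V. {u,v}\<in>E} = {j\<in>{0..<k*m}. j mod k \<noteq> f v mod k}"
      proof
        show "f ` {u\<in>V. {u,v}\<in>E} \<subseteq> {j\<in>{0..<k*m}. j mod k \<noteq> f v mod k}"
        proof
          fix j assume "j \<in> f ` {u\<in>V. {u,v}\<in>E}"
          then obtain u where u: "u \<in> V" "{u,v} \<in> E" "j = f u" by blast
          hence "{f u, f v} \<in> turan_edges n k" using fp v by blast
          thus "j \<in> {j\<in>{0..<k*m}. j mod k \<noteq> f v mod k}" using u(3) nkm turan_mem by auto
        qed
      next
        show "{j\<in>{0..<k*m}. j mod k \<noteq> f v mod k} \<subseteq> f ` {u\<in>V. {u,v}\<in>E}"
        proof
          fix j assume j: "j \<in> {j\<in>{0..<k*m}. j mod k \<noteq> f v mod k}"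
          hence "j \<in> f ` V" using fb nkm by (auto simp: bij_betw_def)
          then obtain u where u: "u \<in> V" "j = f u" by blast
          have "{f u, f v} \<in> turan_edges n k" unfolding turan_mem using j u fvn nkm by auto
          hence "{u,v} \<in> E" using fp u(1) v by blast
          thus "j \<in> f ` {u\<in>V. {u,v}\<in>E}" using u by blast
        qed
      qed
      have "inj_on f {u\<in>V. {u,v}\<in>E}" using fb by (auto simp: bij_betw_def intro: inj_on_subset)
      hence "card (f ` {u\<in>V. {u,v}\<in>E}) = card {u\<in>V. {u,v}\<in>E}" by (rule card_image)
      hence "card {u\<in>V. {u,v}\<in>E} = card {j\<in>{0..<k*m}. j mod k \<noteq> f v mod k}"
        unfolding img by simp
      also have "\<dots> = k*m - m" using nres_card[OF k0] k0 by simp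
      finally have "degree V E v = k*m - m" unfolding degree_def .
      moreover have "m \<le> k*m" using k0 by simp
      ultimately show "x v = D" unfolding x_def D_def N_def M_def nkm by (simp add: of_nat_diff)
    qed
    have cardE: "2 * real (card E) = N * D"
    proof -
      have "(\<Sum>e\<in>E. \<Sum>v\<in>e. (1::real)) = (\<Sum>v\<in>V. real (degree V E v) * 1)" by (rule handshake[OF sg])
      also have "\<dots> = (\<Sum>v\<in>V. D)" using xD by (intro sum.cong) (auto simp: xdeg)
      also have "\<dots> = N * D" unfolding N_def assms(2)[symmetric] by simp
      finally have a: "(\<Sum>e\<in>E. \<Sum>v\<in>e. (1::real)) = N * D" .
      have "(\<Sum>e\<in>E. \<Sum>v\<in>e. (1::real)) = (\<Sum>e\<in>E. 2)"
      proof (rule sum.cong)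
        fix e assume "e \<in> E"
        hence "card e = 2" using sg by (auto simp: simple_graph_def)
        thus "(\<Sum>v\<in>e. (1::real)) = 2" by simp
      qed simp
      thus ?thesis using a by simp
    qed
    have "ABC V E = (\<Sum>e\<in>E. sqrt ((D + D - 2) / (D * D)))"
      unfolding ABC_def
    proof (rule sum.cong)
      fix e assume e: "e \<in> E"
      obtain a b where ab: "a \<noteq> b" "a \<in> V" "b \<in> V" "e = {a,b}" using sg_edge[OF sg e] by blast
      show "sqrt (((\<Sum>v\<in>e. real (degree V E v)) - 2) / (\<Prod>v\<in>e. real (degree V E v))) = sqrt ((D + D - 2) / (D * D))"
        using ab xD by (simp add: xdeg)
    qed simp
    also have "\<dots> = real (card E) * sqrt ((D + D - 2) / (D * D))" by simp
    also have "\<dots> = N * sqrt ((D-1)/2)"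
    proof -
      have e: "(D + D - 2) / (D * D) = ((D-1)/2) * (2/D)^2" using D0 by (simp add: field_simps power2_eq_square)
      have "sqrt ((D + D - 2) / (D * D)) = sqrt (((D-1)/2) * (2/D)^2)" by (simp only: e)
      also have "\<dots> = sqrt ((D-1)/2) * sqrt ((2/D)^2)" by (rule real_sqrt_mult)
      also have "\<dots> = sqrt ((D-1)/2) * (2/D)" using D0 by simp
      finally have sq: "sqrt ((D + D - 2) / (D * D)) = sqrt ((D-1)/2) * (2/D)" .
      have "real (card E) * (sqrt ((D-1)/2) * (2/D)) = (2 * real (card E)) * sqrt ((D-1)/2) / D"
        by (simp add: field_simps)
      also have "\<dots> = N * D * sqrt ((D-1)/2) / D" unfolding cardE ..
      also have "\<dots> = N * sqrt ((D-1)/2)" using D0 by simp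
      finally show ?thesis unfolding sq .
    qed
    finally show ?thesis .
  qed
  ultimately have "ABC V E \<le> N * sqrt ((D-1)/2) \<and> (ABC V E = N * sqrt ((D-1)/2) \<longleftrightarrow> graph_iso V E (turan_vertices n) (turan_edges n k))"
    by (intro conjI iffI)
  thus ?thesis unfolding k_def[symmetric] RHS .
qed
end
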